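(* Let $Q\in(0,1/2)$, $\sigma>0$ and $\beta\in(0,1)$, and define $\pi^B(\beta)=\frac{(1-2Q)\sigma}{1+\sigma}+2Q\beta$, $\Delta_O^B(\beta)=\frac{\beta Q(\sigma+1)-2Q\sigma+\sigma}{2\beta Q(\sigma+1)-2Q\sigma+\sigma}-\frac{(1-2Q)\sigma}{1+\sigma}-Q$, $V(\beta)=\pi^B(\beta)\Delta_O^B(\beta)=(1-2Q)\frac{\sigma+Q\left(\beta-\sigma+\sigma^2(1-\beta)\right)}{(\sigma+1)^2}$. Then (i) $\pi^B$ is strictly increasing and $\Delta_O^B$ is strictly decreasing in $\beta$; (ii) $\frac{\partial^2V}{\partial\beta\,\partial\sigma}<0$, and $V'(\beta)>0$ if $\sigma<1$, $V'(\beta)=0$ if $\sigma=1$, $V'(\beta)<0$ if $\sigma>1$.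
   Context: Interpretation (not needed for the claim): in a model with a symmetric type distribution $F$ on $[-1/2,1/2]$, recommendation threshold $R$, $\beta=F(1/2-R)$, prior probabilities $q_H,q_1,q_2,q_L$ of product versions $(1,1),(1,0),(0,1),(0,0)$, $Q=(q_1+q_2)/2$ and $\sigma=q_H/q_L$, the quantities $\pi^B$, $\Delta_O^B$ and $V$ are the probability of a buy recommendation, the objective effect of a buy recommendation, and the value of the recommendation system. *)

theory Defs
  imports "HOL-Analysis.Analysis"
begin

definition piB :: "real \<Rightarrow> real \<Rightarrow> real \<Rightarrow> real" where
  "piB Q \<sigma> \<beta> = (1 - 2*Q) * \<sigma> / (1 + \<sigma>) + 2 * Q * \<beta>"

definition DeltaOB :: "real \<Rightarrow> real \<Rightarrow> real \<Rightarrow> real" where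
  "DeltaOB Q \<sigma> \<beta> =
     (\<beta> * Q * (\<sigma> + 1) - 2 * Q * \<sigma> + \<sigma>) / (2 * \<beta> * Q * (\<sigma> + 1) - 2 * Q * \<sigma> + \<sigma>)
     - (1 - 2*Q) * \<sigma> / (1 + \<sigma>) - Q"

definition Vval :: "real \<Rightarrow> real \<Rightarrow> real \<Rightarrow> real" where
  "Vval Q \<sigma> \<beta> = piB Q \<sigma> \<beta> * DeltaOB Q \<sigma> \<beta>"

end

theory Submission
  imports Defs
begin

lemma Vclosed:
  fixes Q s b :: real
  assumes "0 < Q" "Q < 1/2" "0 < s" "0 \<le> b"
  shows "Vval Q s b = (1 - 2*Q) * (s + Q * (b - s + s^2 * (1 - b))) / (s + 1)^2"
proof -
  have D: "2 * b * Q * (s + 1) - 2 * Q * s + s > 0"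
  proof -
    have "s * (1 - 2*Q) > 0" using assms by simp
    moreover have "2 * b * Q * (s + 1) \<ge> 0" using assms by simp
    ultimately show ?thesis by (simp add: algebra_simps)
  qed
  have s1: "s + 1 \<noteq> 0" "1 + s \<noteq> 0" using assms by auto
  define D where "D = 2 * b * Q * (s + 1) - 2 * Q * s + s"
  have p: "piB Q s b = D / (1 + s)" unfolding piB_def D_def using s1
    by (simp add: field_simps)
  have "Vval Q s b = D / (1 + s) * ((b * Q * (s + 1) - 2 * Q * s + s) / D
     - (1 - 2*Q) * s / (1 + s) - Q)" unfolding Vval_def p DeltaOB_def D_def by simp
  also have "\<dots> = (b * Q * (s + 1) - 2 * Q * s + s) / (1 + s) - D / (1 + s) * ((1 - 2*Q) * s / (1 + s) + Q)"
  proof -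
    have "D / (1 + s) * ((b * Q * (s + 1) - 2 * Q * s + s) / D) = (b * Q * (s + 1) - 2 * Q * s + s) / (1 + s)"
      using D unfolding D_def[symmetric] by simp
    thus ?thesis by (simp add: algebra_simps)
  qed
  also have "\<dots> = (1 - 2*Q) * (s + Q * (b - s + s^2 * (1 - b))) / (s + 1)^2"
  proof -
    define N where "N = b * Q * (s + 1) - 2 * Q * s + s"
    define t where "t = 1 + s"
    have t: "t \<noteq> 0" using assms by (simp add: t_def)
    have "N / t - D / t * ((1 - 2*Q) * s / t + Q) = (N*t - D*((1 - 2*Q) * s + Q*t)) / t^2"
      using t by (simp add: field_simps power2_eq_square)
    also have "N*t - D*((1 - 2*Q) * s + Q*t) = (1 - 2*Q) * (s + Q * (b - s + s^2 * (1 - b)))"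
      unfolding N_def D_def t_def by (simp add: algebra_simps power2_eq_square)
    finally show ?thesis unfolding N_def t_def by (simp add: add.commute)
  qed
  finally show ?thesis .
qed

lemma Vderiv:
  fixes Q s b :: real
  assumes "0 < Q" "Q < 1/2" "0 < s" "0 < b"
  shows "(Vval Q s has_field_derivative (1 - 2*Q) * Q * (1 - s) / (1 + s)) (at b)"
proof -
  let ?f = "\<lambda>b. (1 - 2*Q) * (s + Q * (b - s + s^2 * (1 - b))) / (s + 1)^2"
  have "(?f has_field_derivative (1 - 2*Q) * (Q * (1 - s^2)) / (s + 1)^2) (at b)"
  proof -
    define K where "K = (1 - 2*Q) * (Q * (1 - s^2)) / (s + 1)^2"
    define C where "C = (1 - 2*Q) * (s + Q * (- s + s^2)) / (s + 1)^2"
    have sp: "(s+1)^2 \<noteq> 0" using assms by simp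
    have "?f = (\<lambda>b. C + K * b)"
      by (rule ext) (use sp in \<open>simp add: K_def C_def divide_simps, simp add: algebra_simps\<close>)
    moreover have "((\<lambda>b. C + K * b) has_field_derivative K) (at b)"
      by (auto intro!: derivative_eq_intros)
    ultimately show ?thesis by (simp add: K_def)
  qed
  moreover have "(1 - 2*Q) * (Q * (1 - s^2)) / (s + 1)^2 = (1 - 2*Q) * Q * (1 - s) / (1 + s)"
  proof -
    have e: "(s+1)^2 = (1+s)*(1+s)" "1 - s^2 = (1-s)*(1+s)" by (simp_all add: algebra_simps power2_eq_square)
    have "1 + s \<noteq> 0" using assms by simp
    thus ?thesis unfolding e by simp
  qed
  ultimately have d: "(?f has_field_derivative (1 - 2*Q) * Q * (1 - s) / (1 + s)) (at b)" by simp
  show ?thesis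
    apply (rule has_field_derivative_transform_within_open[OF d, of "{0<..}"])
    using assms Vclosed by auto
qed

lemma Vderiv2:
  fixes Q s b :: real
  assumes "0 < Q" "Q < 1/2" "0 < s" "0 < b"
  shows "deriv (Vval Q s) b = (1 - 2*Q) * Q * (1 - s) / (1 + s)"
  using Vderiv[OF assms] DERIV_imp_deriv by blast

theorem lemma2:
  fixes Q \<sigma> \<beta> :: real
  assumes "0 < Q" "Q < 1/2" "0 < \<sigma>" "0 < \<beta>" "\<beta> < 1"
  shows "Vval Q \<sigma> \<beta> = (1 - 2*Q) * (\<sigma> + Q * (\<beta> - \<sigma> + \<sigma>^2 * (1 - \<beta>))) / (\<sigma> + 1)^2
    \<and> strict_mono_on {0<..<1} (piB Q \<sigma>)
    \<and> strict_antimono_on {0<..<1} (DeltaOB Q \<sigma>)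
    \<and> deriv (\<lambda>s. deriv (\<lambda>b. Vval Q s b) \<beta>) \<sigma> < 0
    \<and> (\<sigma> < 1 \<longrightarrow> deriv (Vval Q \<sigma>) \<beta> > 0)
    \<and> (\<sigma> = 1 \<longrightarrow> deriv (Vval Q \<sigma>) \<beta> = 0)
    \<and> (\<sigma> > 1 \<longrightarrow> deriv (Vval Q \<sigma>) \<beta> < 0)"
proof (intro conjI impI)
  show "Vval Q \<sigma> \<beta> = (1 - 2*Q) * (\<sigma> + Q * (\<beta> - \<sigma> + \<sigma>^2 * (1 - \<beta>))) / (\<sigma> + 1)^2"
    using Vclosed assms by simp
  show "strict_mono_on {0<..<1} (piB Q \<sigma>)"
    unfolding strict_mono_on_def piB_def using assms by auto
  show "strict_antimono_on {0<..<1} (DeltaOB Q \<sigma>)"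
  proof (rule monotone_onI)
    fix x y :: real assume x: "x \<in> {0<..<1}" and y: "y \<in> {0<..<1}" and xy: "x < y"
    define a where "a = Q * (\<sigma> + 1)"
    define c where "c = \<sigma> * (1 - 2*Q)"
    have a: "a > 0" and c: "c > 0" using assms by (auto simp: a_def c_def)
    have Dx: "2*a*x + c > 0" "2*a*y + c > 0" using a c x y by (simp_all add: add_pos_pos)
    have "a*c*x < a*c*y" using a c xy by simp
    hence "(a*y+c)*(2*a*x+c) < (a*x+c)*(2*a*y+c)" by (simp add: algebra_simps)
    hence "(a*y+c)/(2*a*y+c) < (a*x+c)/(2*a*x+c)" using Dx by (simp add: divide_simps)
    moreover have e: "y * Q * (\<sigma> + 1) - 2 * Q * \<sigma> + \<sigma> = a*y+c"
      "2 * y * Q * (\<sigma> + 1) - 2 * Q * \<sigma> + \<sigma> = 2*a*y+c"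
      "x * Q * (\<sigma> + 1) - 2 * Q * \<sigma> + \<sigma> = a*x+c"
      "2 * x * Q * (\<sigma> + 1) - 2 * Q * \<sigma> + \<sigma> = 2*a*x+c"
      by (simp_all add: a_def c_def algebra_simps)
    ultimately show "DeltaOB Q \<sigma> x > DeltaOB Q \<sigma> y" unfolding DeltaOB_def e by simp
  qed
  have sgn: "(1 - 2*Q) * Q > 0" using assms by simp
  show "deriv (Vval Q \<sigma>) \<beta> > 0" if "\<sigma> < 1"
    using Vderiv2[OF assms(1-4)] sgn that assms by simp
  show "deriv (Vval Q \<sigma>) \<beta> = 0" if "\<sigma> = 1"
    using Vderiv2[OF assms(1-4)] that by simp
  show "deriv (Vval Q \<sigma>) \<beta> < 0" if "\<sigma> > 1"
  proof -
    have "(1 - 2*Q) * Q * (1 - \<sigma>) < 0" using sgn that by (simp add: mult_pos_neg)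
    thus ?thesis using Vderiv2[OF assms(1-4)] assms by (simp add: divide_neg_pos)
  qed
  let ?g = "\<lambda>s. (1 - 2*Q) * Q * (1 - s) / (1 + s)"
  have "(?g has_field_derivative (1 - 2*Q) * Q * (-1 * (1 + \<sigma>) - (1 - \<sigma>)) / (1 + \<sigma>)^2) (at \<sigma>)"
    using assms by (auto intro!: derivative_eq_intros simp: field_simps power2_eq_square)
  hence "((\<lambda>s. deriv (\<lambda>b. Vval Q s b) \<beta>) has_field_derivative (1 - 2*Q) * Q * (-1 * (1 + \<sigma>) - (1 - \<sigma>)) / (1 + \<sigma>)^2) (at \<sigma>)"
    apply (rule has_field_derivative_transform_within_open[of _ _ _ "{0<..}"])
    using assms Vderiv2 by auto
  hence "deriv (\<lambda>s. deriv (\<lambda>b. Vval Q s b) \<beta>) \<sigma> = (1 - 2*Q) * Q * (-2) / (1 + \<sigma>)^2"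
    using DERIV_imp_deriv by fastforce
  moreover have "(1 - 2*Q) * Q * (-2) / (1 + \<sigma>)^2 < 0"
    using sgn assms by (simp add: divide_neg_pos)
  ultimately show "deriv (\<lambda>s. deriv (\<lambda>b. Vval Q s b) \<beta>) \<sigma> < 0" by simp
qed

end
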